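(* Let $m\ge 1$ and consider any complete run of the labeled chip-firing process on $\mathbb{Z}$ starting with $2m$ chips labeled $-m,\dots,-1,1,\dots,m$ at site $0$. For integers $x,y\ge 0$ let the firing move $(x,y)$ denote the $(\min(x,y)+1)$-th to last firing move performed at site $x-y$ in this run. Then for each chip $k$ with $-m\le k<0$ and each $x$ with $0\le x\le m-1$, the position of chip $k$ immediately preceding firing move $(x,-k-1)$ is at most $x+k+1$. Similarly, for each chip $k$ with $0<k\le m$ and each $y$ with $0\le y\le m-1$, the position of chip $k$ immediately preceding firing move $(k-1,y)$ is at least $k-1-y$.
   Context: Labeled chip-firing on the infinite path graph $\mathbb{Z}$ (each integer $i$ adjacent to $i-1$ and $i+1$): a firing move consists of choosing two chips with labels $a<b$ located at a common site $i$, and moving chip $a$ to site $i-1$ and chip $b$ to site $i+1$. A complete run is a sequence of legal firing moves ending in a configuration where all chips occupy distinct sites (so no further firing move is possible). *)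

theory Defs
  imports Main
begin

text \<open>A configuration assigns to every label its site: int => int
  (only labels in the chip set matter). A firing move is recorded as the pair
  (a, b) of chip labels fired, with a < b, both at a common site i;
  chip a moves to i - 1 and chip b to i + 1.\<close>

type_synonym config = "int \<Rightarrow> int"

definition chips :: "int \<Rightarrow> int set" where
  "chips m = {-m..m} - {0}"

definition init_config :: config where
  "init_config = (\<lambda>k. 0)"

definition fire :: "config \<Rightarrow> int \<times> int \<Rightarrow> config" where
  "fire c ab = (case ab of (a, b) \<Rightarrow> c(a := c a - 1, b := c b + 1))"

text \<open>Configuration immediately preceding the t-th move (index from 0);
  for t = length ms this is the final configuration.\<close>
definition conf_at :: "(int \<times> int) list \<Rightarrow> nat \<Rightarrow> config" where
  "conf_at ms t = foldl fire init_config (take t ms)"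

definition legal_run :: "int \<Rightarrow> (int \<times> int) list \<Rightarrow> bool" where
  "legal_run m ms \<longleftrightarrow> (\<forall>t < length ms.
     fst (ms ! t) < snd (ms ! t) \<and> fst (ms ! t) \<in> chips m \<and> snd (ms ! t) \<in> chips m \<and>
     conf_at ms t (fst (ms ! t)) = conf_at ms t (snd (ms ! t)))"

definition complete_run :: "int \<Rightarrow> (int \<times> int) list \<Rightarrow> bool" where
  "complete_run m ms \<longleftrightarrow> legal_run m ms \<and> inj_on (conf_at ms (length ms)) (chips m)"

definition move_site :: "(int \<times> int) list \<Rightarrow> nat \<Rightarrow> int" where
  "move_site ms t = conf_at ms t (fst (ms ! t))"

definition is_move_xy :: "(int \<times> int) list \<Rightarrow> int \<Rightarrow> int \<Rightarrow> nat \<Rightarrow> bool" where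
  "is_move_xy ms x y t \<longleftrightarrow> t < length ms \<and> move_site ms t = x - y \<and>
     int (card {t'. t < t' \<and> t' < length ms \<and> move_site ms t' = x - y}) = min x y"

end

theory Submission
  imports Defs
begin

definition tri :: "int \<Rightarrow> int" where
  "tri d = d * (d + 1) div 2"

definition Fm :: "int \<Rightarrow> int \<Rightarrow> int" where
  "Fm m s = tri (max 0 (m - \<bar>s\<bar>))"

definition fin :: "int \<Rightarrow> int \<Rightarrow> int" where
  "fin m s = (if s \<noteq> 0 \<and> \<bar>s\<bar> \<le> m then 1 else 0)"

lemma tri_Suc: "d \<ge> 0 \<Longrightarrow> tri (d + 1) = tri d + d + 1"
proof -
  assume "d \<ge> 0"
  have "(d + 1) * (d + 1 + 1) = d * (d + 1) + 2 * (d + 1)" by (simp add: algebra_simps)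
  then show ?thesis unfolding tri_def by simp
qed

lemma tri_0[simp]: "tri 0 = 0" by (simp add: tri_def)

lemma tri_ge: "d \<ge> 0 \<Longrightarrow> tri d \<ge> d"
proof (induction d rule: int_ge_induct)
  case base then show ?case by simp
next
  case (step i) then show ?case using tri_Suc[of i] by simp
qed

lemma Fm_nonneg: "Fm m s \<ge> 0"
  unfolding Fm_def using tri_ge[of "max 0 (m - \<bar>s\<bar>)"] by simp

lemma Fm_ge: "\<bar>s\<bar> \<le> m \<Longrightarrow> Fm m s \<ge> m - \<bar>s\<bar>"
  unfolding Fm_def using tri_ge[of "m - \<bar>s\<bar>"] by simp

lemma Fm_out: "\<bar>s\<bar> \<ge> m \<Longrightarrow> Fm m s = 0"
  unfolding Fm_def by simp

lemma Flap: assumes "m \<ge> 1"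
  shows "Fm m (s - 1) + Fm m (s + 1) - 2 * Fm m s + (if s = 0 then 2 * m else 0) = fin m s"
proof -
  consider "s = 0" | "s \<ge> 1" "s \<le> m - 1" | "s = m" | "s \<ge> m + 1" | "s \<le> -1" "s \<ge> 1 - m" | "s = -m" | "s \<le> -m - 1"
    by linarith
  then show ?thesis
  proof cases
    case 1
    have "tri m = tri (m - 1) + (m - 1) + 1" using tri_Suc[of "m - 1"] assms by simp
    then show ?thesis using 1 assms by (simp add: Fm_def fin_def)
  next
    case 2
    have a: "tri (m - s + 1) = tri (m - s) + (m - s) + 1" using tri_Suc[of "m - s"] 2 by simp
    have b: "tri (m - s) = tri (m - s - 1) + (m - s - 1) + 1" using tri_Suc[of "m - s - 1"] 2 by simp
    have "\<bar>s - 1\<bar> = s - 1" "\<bar>s + 1\<bar> = s + 1" "\<bar>s\<bar> = s" using 2 by auto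
    then show ?thesis using 2 a b by (simp add: Fm_def fin_def max_def algebra_simps)
  next
    case 3
    have "\<bar>s - 1\<bar> = s - 1" "\<bar>s + 1\<bar> = s + 1" "\<bar>s\<bar> = s" using 3 assms by auto
    then show ?thesis using 3 assms tri_Suc[of 0] by (simp add: Fm_def fin_def max_def)
  next
    case 4
    have "\<bar>s - 1\<bar> = s - 1" "\<bar>s + 1\<bar> = s + 1" "\<bar>s\<bar> = s" using 4 assms by auto
    moreover have "max 0 (m - (s - 1)) = 0" using 4 by simp
    ultimately show ?thesis using 4 assms by (simp add: Fm_def fin_def)
  next
    case 5
    have a: "tri (m + s + 1) = tri (m + s) + (m + s) + 1" using tri_Suc[of "m + s"] 5 by simp
    have b: "tri (m + s) = tri (m + s - 1) + (m + s - 1) + 1" using tri_Suc[of "m + s - 1"] 5 by simp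
    have "\<bar>s - 1\<bar> = 1 - s" "\<bar>s + 1\<bar> = - s - 1" "\<bar>s\<bar> = - s" using 5 by auto
    then show ?thesis using 5 a b by (simp add: Fm_def fin_def max_def algebra_simps)
  next
    case 6
    have "\<bar>s - 1\<bar> = 1 - s" "\<bar>s + 1\<bar> = - s - 1" "\<bar>s\<bar> = - s" using 6 assms by auto
    then show ?thesis using 6 assms tri_Suc[of 0] by (simp add: Fm_def fin_def max_def)
  next
    case 7
    have "\<bar>s - 1\<bar> = 1 - s" "\<bar>s + 1\<bar> = - s - 1" "\<bar>s\<bar> = - s" using 7 assms by auto
    moreover have "max 0 (m - (- s - 1)) = 0" using 7 by simp
    ultimately show ?thesis using 7 assms by (simp add: Fm_def fin_def)
  qed
qed

definition Einv :: "int \<Rightarrow> (int \<Rightarrow> int) \<Rightarrow> bool" where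
  "Einv m R \<longleftrightarrow> (\<forall>i.
     (i \<ge> 0 \<longrightarrow> R (i + 1) \<ge> min (R i - 1) (m - i - 1) \<and> R i \<ge> min (R (i + 1)) (m - i - 1)) \<and>
     (i \<le> 0 \<longrightarrow> R (i - 1) \<ge> min (R i - 1) (m + i - 1) \<and> R i \<ge> min (R (i - 1)) (m + i - 1)))"

definition Nval :: "int \<Rightarrow> (int \<Rightarrow> int) \<Rightarrow> int \<Rightarrow> int" where
  "Nval m R s = fin m s - (R (s - 1) + R (s + 1) - 2 * R s)"

lemma fin_le1: "fin m s \<le> 1" by (simp add: fin_def)
lemma fin_0[simp]: "fin m 0 = 0" by (simp add: fin_def)

lemma Estep:
  assumes E: "Einv m R" and N: "Nval m R v \<ge> 2"
  shows "Einv m (R(v := R v - 1))"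
proof -
  have E1: "\<And>i. i \<ge> 0 \<Longrightarrow> R (i + 1) \<ge> min (R i - 1) (m - i - 1)"
   and E2: "\<And>i. i \<ge> 0 \<Longrightarrow> R i \<ge> min (R (i + 1)) (m - i - 1)"
   and E3: "\<And>i. i \<le> 0 \<Longrightarrow> R (i - 1) \<ge> min (R i - 1) (m + i - 1)"
   and E4: "\<And>i. i \<le> 0 \<Longrightarrow> R i \<ge> min (R (i - 1)) (m + i - 1)"
    using E unfolding Einv_def by blast+
  have N': "fin m v - (R (v - 1) + R (v + 1) - 2 * R v) \<ge> 2" using N by (simp add: Nval_def)
  have f1: "fin m v \<le> 1" by (rule fin_le1)
  let ?R = "R(v := R v - 1)"
  show ?thesis unfolding Einv_def
  proof (intro allI conjI impI)
    fix i :: int assume i: "i \<ge> 0"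
    show "?R (i + 1) \<ge> min (?R i - 1) (m - i - 1)"
    proof (cases "v = i + 1")
      case True
      have a: "R (i + 1) \<ge> min (R i - 1) (m - i - 1)" using E1 i .
      have b: "R (i + 1 + 1) \<ge> min (R (i + 1) - 1) (m - (i + 1) - 1)" using E1[of "i+1"] i by simp
      show ?thesis using True a b N' f1 by (simp add: min_def split: if_splits)
    next
      case False
      have x1: "?R (i + 1) = R (i + 1)" using False by auto
      have x2: "?R i \<le> R i" by auto
      have x3: "R (i + 1) \<ge> min (R i - 1) (m - i - 1)" using E1[OF i] .
      show ?thesis using x1 x2 x3 unfolding min_def by (auto split: if_splits)
    qed
  next
    fix i :: int assume i: "i \<ge> 0"
    show "?R i \<ge> min (?R (i + 1)) (m - i - 1)"
    proof (cases "v = i")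
      case True
      have a: "R i \<ge> min (R (i + 1)) (m - i - 1)" using E2 i .
      show ?thesis
      proof (cases "i = 0")
        case True
        have b: "R (0 - 1) \<ge> min (R 0 - 1) (m + 0 - 1)" using E3[of 0] by simp
        show ?thesis using True \<open>v = i\<close> a b N' by (simp add: min_def split: if_splits)
      next
        case False
        have b: "R (i - 1) \<ge> min (R (i - 1 + 1)) (m - (i - 1) - 1)" using E2[of "i - 1"] i False by simp
        show ?thesis using True a b N' f1 by (simp add: min_def split: if_splits)
      qed
    next
      case False
      have x1: "?R i = R i" using False by auto
      have x2: "?R (i + 1) \<le> R (i + 1)" by auto
      have x3: "R i \<ge> min (R (i + 1)) (m - i - 1)" using E2[OF i] .
      show ?thesis using x1 x2 x3 unfolding min_def by (auto split: if_splits)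
    qed
  next
    fix i :: int assume i: "i \<le> 0"
    show "?R (i - 1) \<ge> min (?R i - 1) (m + i - 1)"
    proof (cases "v = i - 1")
      case True
      have a: "R (i - 1) \<ge> min (R i - 1) (m + i - 1)" using E3 i .
      have b: "R (i - 1 - 1) \<ge> min (R (i - 1) - 1) (m + (i - 1) - 1)" using E3[of "i - 1"] i by simp
      show ?thesis using True a b N' f1 by (simp add: min_def split: if_splits)
    next
      case False
      have x1: "?R (i - 1) = R (i - 1)" using False by auto
      have x2: "?R i \<le> R i" by auto
      have x3: "R (i - 1) \<ge> min (R i - 1) (m + i - 1)" using E3[OF i] .
      show ?thesis using x1 x2 x3 unfolding min_def by (auto split: if_splits)
    qed
  next
    fix i :: int assume i: "i \<le> 0"
    show "?R i \<ge> min (?R (i - 1)) (m + i - 1)"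
    proof (cases "v = i")
      case True
      have a: "R i \<ge> min (R (i - 1)) (m + i - 1)" using E4 i .
      show ?thesis
      proof (cases "i = 0")
        case True
        have b: "R (0 + 1) \<ge> min (R 0 - 1) (m - 0 - 1)" using E1[of 0] by simp
        show ?thesis using True \<open>v = i\<close> a b N' by (simp add: min_def split: if_splits)
      next
        case False
        have b: "R (i + 1) \<ge> min (R (i + 1 - 1)) (m + (i + 1) - 1)" using E4[of "i + 1"] i False by simp
        show ?thesis using True a b N' f1 by (simp add: min_def split: if_splits)
      qed
    next
      case False
      have x1: "?R i = R i" using False by auto
      have x2: "?R (i - 1) \<le> R (i - 1)" by auto
      have x3: "R i \<ge> min (R (i - 1)) (m + i - 1)" using E4[OF i] .
      show ?thesis using x1 x2 x3 unfolding min_def by (auto split: if_splits)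
    qed
  qed
qed

lemma Econs:
  assumes E: "Einv m R" and N: "Nval m R v \<ge> 2" and rng: "R v \<le> m - \<bar>v\<bar>"
  shows "Nval m R v = 2 \<and> fin m v = (if v = 0 then 0 else 1)
    \<and> (v \<ge> 1 \<longrightarrow> R (v - 1) = R v \<and> R (v + 1) = R v - 1)
    \<and> (v = 0 \<longrightarrow> R (v - 1) = R v - 1 \<and> R (v + 1) = R v - 1)
    \<and> (v \<le> -1 \<longrightarrow> R (v + 1) = R v \<and> R (v - 1) = R v - 1)"
proof -
  have E1: "\<And>i. i \<ge> 0 \<Longrightarrow> R (i + 1) \<ge> min (R i - 1) (m - i - 1)"
   and E2: "\<And>i. i \<ge> 0 \<Longrightarrow> R i \<ge> min (R (i + 1)) (m - i - 1)"
   and E3: "\<And>i. i \<le> 0 \<Longrightarrow> R (i - 1) \<ge> min (R i - 1) (m + i - 1)"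
   and E4: "\<And>i. i \<le> 0 \<Longrightarrow> R i \<ge> min (R (i - 1)) (m + i - 1)"
    using E unfolding Einv_def by blast+
  have N': "fin m v - (R (v - 1) + R (v + 1) - 2 * R v) \<ge> 2" using N by (simp add: Nval_def)
  have f1: "fin m v \<le> 1" by (rule fin_le1)
  consider "v \<ge> 1" | "v = 0" | "v \<le> -1" by linarith
  then show ?thesis
  proof cases
    case 1
    have a: "R (v - 1) \<ge> min (R (v - 1 + 1)) (m - (v - 1) - 1)" using E2[of "v - 1"] 1 by simp
    have b: "R (v + 1) \<ge> min (R v - 1) (m - v - 1)" using E1[of v] 1 by simp
    have "\<bar>v\<bar> = v" using 1 by simp
    then show ?thesis using 1 a b N' f1 rng by (simp add: Nval_def fin_def min_def split: if_splits)
  next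
    case 2
    have a: "R (0 - 1) \<ge> min (R 0 - 1) (m + 0 - 1)" using E3[of 0] by simp
    have b: "R (0 + 1) \<ge> min (R 0 - 1) (m - 0 - 1)" using E1[of 0] by simp
    show ?thesis using 2 a b N' rng by (simp add: Nval_def min_def split: if_splits)
  next
    case 3
    have a: "R (v + 1) \<ge> min (R (v + 1 - 1)) (m + (v + 1) - 1)" using E4[of "v + 1"] 3 by simp
    have b: "R (v - 1) \<ge> min (R v - 1) (m + v - 1)" using E3[of v] 3 by simp
    have "\<bar>v\<bar> = - v" using 3 by simp
    then show ?thesis using 3 a b N' f1 rng by (simp add: Nval_def fin_def min_def split: if_splits)
  qed
qed

lemma Einv_Fm: "Einv m (Fm m)"
  unfolding Einv_def
proof (intro allI conjI impI)
  fix i :: int assume i: "i \<ge> 0"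
  show "Fm m (i + 1) \<ge> min (Fm m i - 1) (m - i - 1)"
    using Fm_ge[of "i+1" m] Fm_nonneg[of m "i+1"] i by (cases "i + 1 \<le> m") (auto simp: min_def)
  show "Fm m i \<ge> min (Fm m (i + 1)) (m - i - 1)"
    using Fm_ge[of "i" m] Fm_nonneg[of m "i"] i by (cases "i \<le> m") (auto simp: min_def)
next
  fix i :: int assume i: "i \<le> 0"
  show "Fm m (i - 1) \<ge> min (Fm m i - 1) (m + i - 1)"
    using Fm_ge[of "i-1" m] Fm_nonneg[of m "i-1"] i by (cases "1 - i \<le> m") (auto simp: min_def)
  show "Fm m i \<ge> min (Fm m (i - 1)) (m + i - 1)"
    using Fm_ge[of "i" m] Fm_nonneg[of m "i"] i by (cases "- i \<le> m") (auto simp: min_def)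
qed

lemma maxp:
  assumes m1: "m \<ge> 1" and nn: "\<And>s. R s \<ge> 0" and out: "\<And>s. \<bar>s\<bar> \<ge> m \<Longrightarrow> R s = 0"
    and N1: "\<And>s. Nval m R s \<le> 1"
  shows "R s = 0"
proof (rule ccontr)
  assume "R s \<noteq> 0"
  then have s0: "R s > 0" using nn[of s] by simp
  define A where "A = {-m..m}"
  have finA: "finite A" unfolding A_def by simp
  have sA: "s \<in> A" using s0 out[of s] unfolding A_def by (cases "\<bar>s\<bar> \<ge> m") auto
  define M where "M = Max (R ` A)"
  have RM: "R i \<le> M" for i
  proof (cases "i \<in> A")
    case True then show ?thesis unfolding M_def using finA by simp
  next
    case False
    then have "R i = 0" using out[of i] unfolding A_def by auto
    moreover have "R s \<le> M" unfolding M_def using finA sA by simp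
    ultimately show ?thesis using s0 by simp
  qed
  have Mpos: "M > 0" using RM[of s] s0 by simp
  define B where "B = {i \<in> A. R i = M}"
  have finB: "finite B" unfolding B_def using finA by simp
  have "M \<in> R ` A" unfolding M_def using finA sA by (intro Max_in) auto
  then have Bne: "B \<noteq> {}" unfolding B_def by auto
  define ia where "ia = Max B"
  define ib where "ib = Min B"
  have iaB: "ia \<in> B" unfolding ia_def using finB Bne by simp
  have ibB: "ib \<in> B" unfolding ib_def using finB Bne by simp
  have aboveB: "R j < M" if "j > ia" for j
  proof -
    have "j \<notin> B" using that Max_ge[OF finB] unfolding ia_def by fastforce
    then have "j \<notin> A \<or> R j \<noteq> M" unfolding B_def by auto
    then show ?thesis using RM[of j] out[of j] Mpos unfolding A_def by (cases "j \<in> {-m..m}") auto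
  qed
  have belowB: "R j < M" if "j < ib" for j
  proof -
    have "j \<notin> B" using that Min_le[OF finB] unfolding ib_def by fastforce
    then have "j \<notin> A \<or> R j \<noteq> M" unfolding B_def by auto
    then show ?thesis using RM[of j] out[of j] Mpos unfolding A_def by (cases "j \<in> {-m..m}") auto
  qed
  have Ria: "R ia = M" and Rib: "R ib = M" using iaB ibB unfolding B_def by auto
  have ia_in: "\<bar>ia\<bar> < m" using Ria Mpos out[of ia] by (cases "\<bar>ia\<bar> \<ge> m") auto
  have ib_in: "\<bar>ib\<bar> < m" using Rib Mpos out[of ib] by (cases "\<bar>ib\<bar> \<ge> m") auto
  have ia0: "ia = 0"
  proof (rule ccontr)
    assume "ia \<noteq> 0"
    then have "fin m ia = 1" using ia_in by (simp add: fin_def)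
    moreover have "R (ia + 1) < M" using aboveB by simp
    moreover have "R (ia - 1) \<le> M" using RM by simp
    ultimately have "Nval m R ia \<ge> 2" using Ria by (simp add: Nval_def)
    then show False using N1[of ia] by simp
  qed
  have ib0: "ib = 0"
  proof (rule ccontr)
    assume "ib \<noteq> 0"
    then have "fin m ib = 1" using ib_in by (simp add: fin_def)
    moreover have "R (ib - 1) < M" using belowB by simp
    moreover have "R (ib + 1) \<le> M" using RM by simp
    ultimately have "Nval m R ib \<ge> 2" using Rib by (simp add: Nval_def)
    then show False using N1[of ib] by simp
  qed
  have "R 1 < M" using aboveB[of 1] ia0 by simp
  moreover have "R (-1) < M" using belowB[of "-1"] ib0 by simp
  ultimately have "Nval m R 0 \<ge> 2" using Ria ia0 by (simp add: Nval_def)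
  then show False using N1[of 0] by simp
qed

definition cnt :: "(int \<times> int) list \<Rightarrow> int \<Rightarrow> nat \<Rightarrow> nat" where
  "cnt ms s t = card {t'. t' < t \<and> move_site ms t' = s}"

definition rr :: "int \<Rightarrow> (int \<times> int) list \<Rightarrow> nat \<Rightarrow> int \<Rightarrow> int" where
  "rr m ms t s = Fm m s - int (cnt ms s t)"

definition Nc :: "int \<Rightarrow> (int \<times> int) list \<Rightarrow> nat \<Rightarrow> int \<Rightarrow> nat" where
  "Nc m ms t i = card {k \<in> chips m. conf_at ms t k = i}"

lemma cnt_0[simp]: "cnt ms s 0 = 0" by (simp add: cnt_def)

lemma cnt_Suc: "cnt ms s (Suc t) = cnt ms s t + (if move_site ms t = s then 1 else 0)"
proof -
  have "{t'. t' < Suc t \<and> move_site ms t' = s} =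
        (if move_site ms t = s then insert t {t'. t' < t \<and> move_site ms t' = s} else {t'. t' < t \<and> move_site ms t' = s})"
    by (auto simp: less_Suc_eq)
  then show ?thesis unfolding cnt_def by simp
qed

lemma cnt_mono: "t \<le> t' \<Longrightarrow> cnt ms s t \<le> cnt ms s t'"
  unfolding cnt_def by (rule card_mono) auto

lemma rr_Suc: "rr m ms (Suc t) = (rr m ms t)(move_site ms t := rr m ms t (move_site ms t) - 1)"
  by (rule ext) (simp add: rr_def cnt_Suc)

lemma finite_chips: "finite (chips m)" by (simp add: chips_def)

lemma card_chips: "m \<ge> 0 \<Longrightarrow> card (chips m) = nat (2 * m)"
proof -
  assume "m \<ge> 0"
  have "card (chips m) = card {-m..m} - 1" unfolding chips_def using \<open>m \<ge> 0\<close>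
    by (subst card_Diff_singleton) auto
  then show ?thesis using \<open>m \<ge> 0\<close> by simp
qed

lemma conf_Suc: "t < length ms \<Longrightarrow> conf_at ms (Suc t) = fire (conf_at ms t) (ms ! t)"
  unfolding conf_at_def by (simp add: take_Suc_conv_app_nth)

lemma conf_0: "conf_at ms 0 = init_config" by (simp add: conf_at_def)

context
  fixes m :: int and ms :: "(int \<times> int) list"
  assumes m1: "m \<ge> 1" and lr: "legal_run m ms"
begin

lemma lt: assumes "t < length ms"
  shows "fst (ms ! t) < snd (ms ! t)" "fst (ms ! t) \<in> chips m" "snd (ms ! t) \<in> chips m"
    "conf_at ms t (fst (ms ! t)) = conf_at ms t (snd (ms ! t))"
  using lr assms unfolding legal_run_def by auto

lemma pos_Suc: assumes "t < length ms"
  shows "conf_at ms (Suc t) k = (if k = fst (ms ! t) then conf_at ms t k - 1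
     else if k = snd (ms ! t) then conf_at ms t k + 1 else conf_at ms t k)"
proof -
  obtain a b where ab: "ms ! t = (a, b)" by (cases "ms ! t")
  have "a < b" using lt(1)[OF assms] ab by simp
  then show ?thesis using ab conf_Suc[OF assms] by (auto simp: fire_def)
qed

lemma site_a: "t < length ms \<Longrightarrow> conf_at ms t (fst (ms ! t)) = move_site ms t"
  by (simp add: move_site_def)
lemma site_b: "t < length ms \<Longrightarrow> conf_at ms t (snd (ms ! t)) = move_site ms t"
  using lt(4) by (simp add: move_site_def)

lemma Nc_formula:
  "t \<le> length ms \<Longrightarrow> int (Nc m ms t i) = (if i = 0 then 2 * m else 0) + int (cnt ms (i - 1) t)
     + int (cnt ms (i + 1) t) - 2 * int (cnt ms i t)"
proof (induction t arbitrary: i)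
  case 0
  have "{k \<in> chips m. conf_at ms 0 k = i} = (if i = 0 then chips m else {})"
    by (auto simp: conf_0 init_config_def)
  then show ?case using card_chips[of m] m1 by (simp add: Nc_def)
next
  case (Suc t)
  then have tl: "t < length ms" by simp
  define a where "a = fst (ms ! t)"
  define b where "b = snd (ms ! t)"
  define v where "v = move_site ms t"
  define S where "S = (\<lambda>j. {k \<in> chips m. conf_at ms t k = j})"
  have ab: "a \<noteq> b" using lt(1)[OF tl] unfolding a_def b_def by simp
  have ac: "a \<in> chips m" "b \<in> chips m" using lt(2,3)[OF tl] unfolding a_def b_def by auto
  have av: "conf_at ms t a = v" "conf_at ms t b = v" using site_a[OF tl] site_b[OF tl]
    unfolding a_def b_def v_def by auto
  have ps: "conf_at ms (Suc t) k = (if k = a then conf_at ms t k - 1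
     else if k = b then conf_at ms t k + 1 else conf_at ms t k)" for k
    using pos_Suc[OF tl] unfolding a_def b_def by simp
  have finS: "finite (S j)" for j unfolding S_def using finite_chips by simp
  have IH: "int (card (S j)) = (if j = 0 then 2 * m else 0) + int (cnt ms (j - 1) t)
     + int (cnt ms (j + 1) t) - 2 * int (cnt ms j t)" for j
    using Suc.IH[of j] tl unfolding Nc_def S_def by simp
  have new: "{k \<in> chips m. conf_at ms (Suc t) k = i} =
     (if i = v then S i - {a, b} else if i = v - 1 then insert a (S i)
      else if i = v + 1 then insert b (S i) else S i)"
    unfolding S_def using ps av ab ac by auto
  show ?case
  proof -
    consider "i = v" | "i = v - 1" | "i = v + 1" | "i \<noteq> v" "i \<noteq> v - 1" "i \<noteq> v + 1" by blast
    then show ?thesis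
    proof cases
      case 1
      have sub: "{a, b} \<subseteq> S i" unfolding S_def using 1 av ac by auto
      have "card (S i - {a, b}) = card (S i) - 2"
        using card_Diff_subset[OF _ sub] finS[of i] ab by simp
      moreover have "card (S i) \<ge> 2" using card_mono[OF finS sub] ab by simp
      ultimately have "int (card (S i - {a, b})) = int (card (S i)) - 2" by simp
      then show ?thesis using new 1 IH[of i] by (simp add: Nc_def cnt_Suc v_def)
    next
      case 2
      have "a \<notin> S i" unfolding S_def using 2 av by auto
      then have "card (insert a (S i)) = card (S i) + 1" using finS[of i] by simp
      then show ?thesis using new 2 IH[of i] by (simp add: Nc_def cnt_Suc v_def)
    next
      case 3
      have "b \<notin> S i" unfolding S_def using 3 av by auto
      then have "card (insert b (S i)) = card (S i) + 1" using finS[of i] by simp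
      then show ?thesis using new 3 IH[of i] by (simp add: Nc_def cnt_Suc v_def)
    next
      case 4
      then show ?thesis using new IH[of i] by (simp add: Nc_def cnt_Suc v_def S_def)
    qed
  qed
qed

lemma Nc_Nval: "t \<le> length ms \<Longrightarrow> int (Nc m ms t i) = Nval m (rr m ms t) i"
  using Nc_formula[of t i] Flap[OF m1, of i] by (simp add: Nval_def rr_def algebra_simps)

lemma Nc_fire: "t < length ms \<Longrightarrow> Nc m ms t (move_site ms t) \<ge> 2"
proof -
  assume tl: "t < length ms"
  have sub: "{fst (ms ! t), snd (ms ! t)} \<subseteq> {k \<in> chips m. conf_at ms t k = move_site ms t}"
    using lt[OF tl] site_a[OF tl] site_b[OF tl] by auto
  have "card {fst (ms ! t), snd (ms ! t)} = 2" using lt(1)[OF tl] by simp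
  then show ?thesis using card_mono[OF _ sub] finite_chips unfolding Nc_def by fastforce
qed

lemma Nval_fire: "t < length ms \<Longrightarrow> Nval m (rr m ms t) (move_site ms t) \<ge> 2"
  using Nc_fire Nc_Nval[of t "move_site ms t"] by fastforce

lemma least_action: "t \<le> length ms \<Longrightarrow> rr m ms t s \<ge> 0"
proof (induction t arbitrary: s)
  case 0 then show ?case by (simp add: rr_def Fm_nonneg)
next
  case (Suc t)
  then have tl: "t < length ms" by simp
  show ?case
  proof (cases "move_site ms t = s")
    case False
    then show ?thesis using Suc.IH[of s] tl by (simp add: rr_Suc)
  next
    case True
    have "rr m ms t s \<noteq> 0"
    proof
      assume z: "rr m ms t s = 0"
      have "Nval m (rr m ms t) s \<le> 1"
        using z Suc.IH[of "s - 1"] Suc.IH[of "s + 1"] tl fin_le1[of m s] by (simp add: Nval_def)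
      then show False using Nval_fire[OF tl] True by simp
    qed
    then show ?thesis using Suc.IH[of s] tl True by (simp add: rr_Suc)
  qed
qed

lemma Einv_t: "t \<le> length ms \<Longrightarrow> Einv m (rr m ms t)"
proof (induction t)
  case 0
  have "rr m ms 0 = Fm m" by (rule ext) (simp add: rr_def)
  then show ?case using Einv_Fm by simp
next
  case (Suc t)
  then have tl: "t < length ms" by simp
  show ?case unfolding rr_Suc by (rule Estep[OF Suc.IH Nval_fire[OF tl]]) (use tl in simp)
qed

end

lemma cross:
  assumes "Q t1" "\<not> Q t2" "t1 \<le> t2"
  shows "\<exists>\<tau>. t1 \<le> \<tau> \<and> \<tau> < t2 \<and> Q \<tau> \<and> \<not> Q (Suc \<tau>)"
  using assms
proof (induction t2)
  case 0 then show ?case by simp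
next
  case (Suc t2)
  show ?case
  proof (cases "Q t2")
    case True
    then show ?thesis using Suc.prems by (intro exI[of _ t2]) (auto simp: le_Suc_eq)
  next
    case False
    then have "t1 \<le> t2" using Suc.prems by (cases "t1 = Suc t2") auto
    then show ?thesis using Suc.IH[OF Suc.prems(1) False] by auto
  qed
qed

lemma cnt_hit: "v < cnt ms s T \<Longrightarrow> \<exists>t<T. move_site ms t = s \<and> cnt ms s t = v"
proof (induction T)
  case 0 then show ?case by simp
next
  case (Suc T)
  show ?case
  proof (cases "v < cnt ms s T")
    case True then show ?thesis using Suc.IH by (meson less_SucI)
  next
    case False
    then have "move_site ms T = s \<and> v = cnt ms s T" using Suc.prems by (simp add: cnt_Suc split: if_splits)
    then show ?thesis by auto
  qed
qed

context
  fixes m :: int and ms :: "(int \<times> int) list"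
  assumes m1: "m \<ge> 1" and cr: "complete_run m ms"
begin

lemma lr: "legal_run m ms" using cr by (simp add: complete_run_def)

lemmas lt' = lt[OF m1 lr]
lemmas pos_Suc' = pos_Suc[OF m1 lr]
lemmas site_a' = site_a[OF m1 lr]
lemmas site_b' = site_b[OF m1 lr]
lemmas Nc_Nval' = Nc_Nval[OF m1 lr]
lemmas Nval_fire' = Nval_fire[OF m1 lr]
lemmas least_action' = least_action[OF m1 lr]
lemmas Einv_t' = Einv_t[OF m1 lr]

lemma chips_bd: "k \<in> chips m \<Longrightarrow> -m \<le> k \<and> k \<le> m \<and> k \<noteq> 0"
  by (auto simp: chips_def)

lemma Nc_final_le1: "Nc m ms (length ms) i \<le> 1"
proof -
  have inj: "inj_on (conf_at ms (length ms)) (chips m)" using cr by (simp add: complete_run_def)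
  have fin: "finite {k \<in> chips m. conf_at ms (length ms) k = i}" using finite_chips by simp
  have "\<forall>a1 \<in> {k \<in> chips m. conf_at ms (length ms) k = i}. \<forall>a2 \<in> {k \<in> chips m. conf_at ms (length ms) k = i}. a1 = a2"
    using inj by (auto simp: inj_on_def)
  then show ?thesis unfolding Nc_def using card_le_Suc0_iff_eq[OF fin] by simp
qed

lemma rr_final: "rr m ms (length ms) s = 0"
proof (rule maxp[OF m1, of "rr m ms (length ms)"])
  show "\<And>s. rr m ms (length ms) s \<ge> 0" using least_action' by simp
  show "\<And>s. \<bar>s\<bar> \<ge> m \<Longrightarrow> rr m ms (length ms) s = 0"
  proof -
    fix s :: int assume "\<bar>s\<bar> \<ge> m"
    then have "Fm m s = 0" by (rule Fm_out)
    then show "rr m ms (length ms) s = 0" using least_action'[of "length ms" s] by (simp add: rr_def)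
  qed
  show "\<And>s. Nval m (rr m ms (length ms)) s \<le> 1"
    using Nc_final_le1 Nc_Nval'[of "length ms"] by (metis order_refl of_nat_le_1_iff)
qed

lemma later: assumes tl: "t < length ms"
  shows "int (card {t'. t < t' \<and> t' < length ms \<and> move_site ms t' = move_site ms t}) = rr m ms t (move_site ms t) - 1"
proof -
  define s where "s = move_site ms t"
  define A where "A = {t'. t' < Suc t \<and> move_site ms t' = s}"
  define B where "B = {t'. t < t' \<and> t' < length ms \<and> move_site ms t' = s}"
  have U: "{t'. t' < length ms \<and> move_site ms t' = s} = A \<union> B"
    unfolding A_def B_def using tl by auto
  have fA: "finite A" unfolding A_def by simp
  have fB: "finite B" unfolding B_def by simp
  have D: "A \<inter> B = {}" unfolding A_def B_def by auto
  have "cnt ms s (length ms) = card A + card B"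
    unfolding cnt_def U using card_Un_disjoint[OF fA fB D] by simp
  moreover have "card A = cnt ms s (Suc t)" unfolding A_def cnt_def by simp
  moreover have "int (cnt ms s (length ms)) = Fm m s" using rr_final[of s] by (simp add: rr_def)
  ultimately have "int (card B) = rr m ms t s - 1" by (simp add: rr_def cnt_Suc s_def)
  then show ?thesis unfolding B_def s_def .
qed

lemma move_exists: assumes "0 \<le> j" "j + 1 \<le> Fm m s"
  shows "\<exists>t < length ms. move_site ms t = s \<and> rr m ms t s = j + 1"
proof -
  have F: "int (cnt ms s (length ms)) = Fm m s" using rr_final[of s] by (simp add: rr_def)
  define v where "v = nat (Fm m s - j - 1)"
  have "v < cnt ms s (length ms)" using F assms unfolding v_def by simp
  then obtain t where "t < length ms" "move_site ms t = s" "cnt ms s t = v" using cnt_hit by blast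
  then show ?thesis using assms unfolding v_def rr_def by auto
qed

lemma simple_inv: "t \<le> length ms \<Longrightarrow> k \<in> chips m \<Longrightarrow>
   (k < 0 \<longrightarrow> conf_at ms t k \<le> k + m) \<and> (k > 0 \<longrightarrow> conf_at ms t k \<ge> k - m)"
proof (induction t arbitrary: k)
  case 0 then show ?case using chips_bd[of k] by (simp add: conf_0 init_config_def)
next
  case (Suc t)
  then have tl: "t < length ms" by simp
  define a where "a = fst (ms ! t)"
  define b where "b = snd (ms ! t)"
  have ab: "a < b" "a \<in> chips m" "b \<in> chips m" using lt'[OF tl] unfolding a_def b_def by auto
  have same: "conf_at ms t a = conf_at ms t b" using lt'(4)[OF tl] unfolding a_def b_def by simp
  have ps: "conf_at ms (Suc t) k = (if k = a then conf_at ms t k - 1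
     else if k = b then conf_at ms t k + 1 else conf_at ms t k)"
    using pos_Suc'[OF tl] unfolding a_def b_def by simp
  have IHa: "(a < 0 \<longrightarrow> conf_at ms t a \<le> a + m) \<and> (a > 0 \<longrightarrow> conf_at ms t a \<ge> a - m)"
    using Suc.IH[of a] tl ab by simp
  have IHb: "(b < 0 \<longrightarrow> conf_at ms t b \<le> b + m) \<and> (b > 0 \<longrightarrow> conf_at ms t b \<ge> b - m)"
    using Suc.IH[of b] tl ab by simp
  have IHk: "(k < 0 \<longrightarrow> conf_at ms t k \<le> k + m) \<and> (k > 0 \<longrightarrow> conf_at ms t k \<ge> k - m)"
    using Suc.IH[of k] tl Suc.prems by simp
  have a0: "a \<noteq> 0" "b \<noteq> 0" using chips_bd ab by auto
  show ?case using ps IHa IHb IHk same ab(1) a0 by auto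
qed

lemma stay: "t1 \<le> t2 \<Longrightarrow> t2 \<le> length ms \<Longrightarrow> (\<forall>t'. t1 \<le> t' \<and> t' < t2 \<longrightarrow> move_site ms t' \<noteq> p)
   \<Longrightarrow> conf_at ms t1 k = p \<Longrightarrow> conf_at ms t2 k = p"
proof (induction t2)
  case 0 then show ?case by simp
next
  case (Suc t2)
  show ?case
  proof (cases "t1 = Suc t2")
    case True then show ?thesis using Suc.prems by simp
  next
    case False
    then have h: "t1 \<le> t2" "t2 < length ms" using Suc.prems by auto
    then have c: "conf_at ms t2 k = p" using Suc.IH Suc.prems by auto
    have "move_site ms t2 \<noteq> p" using Suc.prems h by auto
    then have "k \<noteq> fst (ms ! t2) \<and> k \<noteq> snd (ms ! t2)"
      using c site_a'[OF h(2)] site_b'[OF h(2)] by auto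
    then show ?thesis using pos_Suc'[OF h(2), of k] c by simp
  qed
qed

lemma no_more: assumes "rr m ms t p = 0" "t \<le> t'" "t' < length ms"
  shows "move_site ms t' \<noteq> p"
proof
  assume a: "move_site ms t' = p"
  have "cnt ms p (length ms) \<ge> cnt ms p (Suc t')" using assms(3) by (intro cnt_mono) simp
  moreover have "cnt ms p (Suc t') = cnt ms p t' + 1" using a by (simp add: cnt_Suc)
  moreover have "cnt ms p t' \<ge> cnt ms p t" using assms(2) by (rule cnt_mono)
  ultimately have "rr m ms (length ms) p \<le> rr m ms t p - 1" unfolding rr_def by simp
  then show False using rr_final[of p] assms(1) by simp
qed

lemma rr_pos: "t < length ms \<Longrightarrow> rr m ms t (move_site ms t) \<ge> 1"
  using least_action'[of "Suc t" "move_site ms t"] by (simp add: rr_Suc)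

lemma rr_anti: "t \<le> t' \<Longrightarrow> rr m ms t' s \<le> rr m ms t s"
  using cnt_mono[of t t' ms s] by (simp add: rr_def)

lemma Econs_t: assumes tl: "t < length ms" and rng: "rr m ms t (move_site ms t) \<le> m - \<bar>move_site ms t\<bar>"
  shows "Nval m (rr m ms t) (move_site ms t) = 2
    \<and> (move_site ms t \<ge> 1 \<longrightarrow> rr m ms t (move_site ms t - 1) = rr m ms t (move_site ms t) \<and> rr m ms t (move_site ms t + 1) = rr m ms t (move_site ms t) - 1)
    \<and> (move_site ms t = 0 \<longrightarrow> rr m ms t (move_site ms t - 1) = rr m ms t (move_site ms t) - 1 \<and> rr m ms t (move_site ms t + 1) = rr m ms t (move_site ms t) - 1)
    \<and> (move_site ms t \<le> -1 \<longrightarrow> rr m ms t (move_site ms t + 1) = rr m ms t (move_site ms t) \<and> rr m ms t (move_site ms t - 1) = rr m ms t (move_site ms t) - 1)"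
  using Econs[OF Einv_t'[of t] Nval_fire'[OF tl] rng] tl by simp

lemma empty_after: assumes tl: "t < length ms" and rng: "rr m ms t (move_site ms t) \<le> m - \<bar>move_site ms t\<bar>"
    and kc: "k \<in> chips m"
  shows "conf_at ms (Suc t) k \<noteq> move_site ms t"
proof
  assume c: "conf_at ms (Suc t) k = move_site ms t"
  define S where "S = {k \<in> chips m. conf_at ms t k = move_site ms t}"
  have N2: "card S = 2" using Econs_t[OF tl rng] Nc_Nval'[of t "move_site ms t"] tl unfolding S_def Nc_def by simp
  have sub: "{fst (ms ! t), snd (ms ! t)} \<subseteq> S" using lt'[OF tl] site_a'[OF tl] site_b'[OF tl] unfolding S_def by auto
  have c2: "card {fst (ms ! t), snd (ms ! t)} = 2" using lt'(1)[OF tl] by simp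
  have eq: "{fst (ms ! t), snd (ms ! t)} = S"
    using card_subset_eq[OF _ sub] finite_chips N2 c2 unfolding S_def by simp
  show False
  proof (cases "k = fst (ms ! t) \<or> k = snd (ms ! t)")
    case True
    then show False using c pos_Suc'[OF tl, of k] site_a'[OF tl] site_b'[OF tl] lt'(1)[OF tl] by auto
  next
    case False
    then have "conf_at ms t k = move_site ms t" using c pos_Suc'[OF tl, of k] by simp
    then have "k \<in> S" unfolding S_def using kc by simp
    then show False using eq False by auto
  qed
qed


lemma H: "t < length ms \<Longrightarrow>
   fst (ms ! t) \<ge> -(rr m ms t (move_site ms t) + max 0 (- move_site ms t)) \<and>
   snd (ms ! t) \<le> rr m ms t (move_site ms t) + max 0 (move_site ms t)"
proof (induction t rule: less_induct)
  case (less t)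
  note tl = less.prems
  define i where "i = move_site ms t"
  define R where "R = rr m ms t i"
  define a where "a = fst (ms ! t)"
  define b where "b = snd (ms ! t)"
  have R1: "R \<ge> 1" using rr_pos[OF tl] unfolding R_def i_def .
  have ab: "a < b" "a \<in> chips m" "b \<in> chips m" using lt'[OF tl] unfolding a_def b_def by auto
  have ci: "conf_at ms t a = i" "conf_at ms t b = i" using site_a'[OF tl] site_b'[OF tl]
    unfolding a_def b_def i_def by auto
  have sa: "(a < 0 \<longrightarrow> i \<le> a + m) \<and> (a > 0 \<longrightarrow> i \<ge> a - m)"
    using simple_inv[of t a] tl ab ci by simp
  have sb: "(b < 0 \<longrightarrow> i \<le> b + m) \<and> (b > 0 \<longrightarrow> i \<ge> b - m)"
    using simple_inv[of t b] tl ab ci by simp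
  have ba: "-m \<le> a" "a \<noteq> 0" "b \<le> m" "b \<noteq> 0" using chips_bd ab by auto
  have goal: "a \<ge> -(R + max 0 (- i)) \<and> b \<le> R + max 0 i"
  proof (cases "R - 1 + max 0 i \<le> m - 2 \<and> R - 1 + max 0 (-i) \<le> m - 2")
    case False
    consider "i \<ge> 0" | "i < 0" by linarith
    then show ?thesis
    proof cases
      case 1
      then have "max 0 i = i" "max 0 (-i) = 0" by auto
      then show ?thesis using False sa sb ba R1 ab(1) by (cases "a < 0"; cases "b < 0") auto
    next
      case 2
      then have "max 0 i = 0" "max 0 (-i) = -i" by auto
      then show ?thesis using False sa sb ba R1 ab(1) by (cases "a < 0"; cases "b < 0") auto
    qed
  next
    case True
    have rng1: "R + 1 \<le> m - \<bar>i\<bar>" using True by (cases "i \<ge> 0") auto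
    have Fi: "Fm m i \<ge> m - \<bar>i\<bar>" using Fm_ge[of i m] rng1 R1 by simp
    have ct: "int (cnt ms i t) = Fm m i - R" unfolding R_def rr_def by simp
    have "cnt ms i t - 1 < cnt ms i t" using ct Fi rng1 by simp
    then obtain t1 where t1: "t1 < t" "move_site ms t1 = i" "cnt ms i t1 = cnt ms i t - 1"
      using cnt_hit by blast
    have t1l: "t1 < length ms" using t1 tl by simp
    have rt1: "rr m ms t1 i = R + 1" using t1(3) ct Fi rng1 unfolding rr_def by simp
    have E: "(i \<ge> 1 \<longrightarrow> rr m ms t1 (i - 1) = R + 1 \<and> rr m ms t1 (i + 1) = R)
      \<and> (i = 0 \<longrightarrow> rr m ms t1 (i - 1) = R \<and> rr m ms t1 (i + 1) = R)
      \<and> (i \<le> -1 \<longrightarrow> rr m ms t1 (i + 1) = R + 1 \<and> rr m ms t1 (i - 1) = R)"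
      using Econs_t[OF t1l] t1(2) rt1 rng1 by (cases "i = 0") auto
    have key: "-(R + max 0 (- i)) \<le> k \<and> k \<le> R + max 0 i"
      if kc: "k \<in> chips m" and kt: "conf_at ms t k = i" for k
    proof -
      have e: "conf_at ms (Suc t1) k \<noteq> i"
        using empty_after[OF t1l _ kc] t1(2) rt1 rng1 by simp
      obtain \<tau> where tau: "Suc t1 \<le> \<tau>" "\<tau> < t" "conf_at ms \<tau> k \<noteq> i" "conf_at ms (Suc \<tau>) k = i"
        using cross[of "\<lambda>\<tau>. conf_at ms \<tau> k \<noteq> i" "Suc t1" t] e kt t1(1) by auto
      have taul: "\<tau> < length ms" using tau tl by simp
      have IH: "fst (ms ! \<tau>) \<ge> -(rr m ms \<tau> (move_site ms \<tau>) + max 0 (- move_site ms \<tau>)) \<and>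
        snd (ms ! \<tau>) \<le> rr m ms \<tau> (move_site ms \<tau>) + max 0 (move_site ms \<tau>)"
        using less.IH[OF tau(2) taul] .
      have abt: "fst (ms ! \<tau>) < snd (ms ! \<tau>)" using lt'(1)[OF taul] .
      have anti1: "rr m ms \<tau> (i + 1) \<le> rr m ms t1 (i + 1)" using tau(1) by (intro rr_anti) simp
      have anti2: "rr m ms \<tau> (i - 1) \<le> rr m ms t1 (i - 1)" using tau(1) by (intro rr_anti) simp
      have ps: "conf_at ms (Suc \<tau>) k = (if k = fst (ms ! \<tau>) then conf_at ms \<tau> k - 1
         else if k = snd (ms ! \<tau>) then conf_at ms \<tau> k + 1 else conf_at ms \<tau> k)"
        using pos_Suc'[OF taul] by simp
      consider "k = fst (ms ! \<tau>)" | "k \<noteq> fst (ms ! \<tau>)" "k = snd (ms ! \<tau>)"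
        | "k \<noteq> fst (ms ! \<tau>)" "k \<noteq> snd (ms ! \<tau>)" by blast
      then show ?thesis
      proof cases
        case 1
        then have "conf_at ms \<tau> k = i + 1" using ps tau(4) by simp
        then have st: "move_site ms \<tau> = i + 1" using site_a'[OF taul] 1 by simp
        have A1: "k \<ge> -(rr m ms \<tau> (i + 1) + max 0 (- (i + 1)))" using IH st 1 by simp
        have A2: "k < rr m ms \<tau> (i + 1) + max 0 (i + 1)" using IH st 1 abt by simp
        consider "i \<ge> 1" | "i = 0" | "i \<le> -1" by linarith
        then show ?thesis
        proof cases
          case 1 then show ?thesis using A1 A2 E anti1 by (auto simp: max_def split: if_splits)
        next
          case 2 then show ?thesis using A1 A2 E anti1 by (auto simp: max_def split: if_splits)
        next
          case 3 then show ?thesis using A1 A2 E anti1 by (auto simp: max_def split: if_splits)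
        qed
      next
        case 2
        then have "conf_at ms \<tau> k = i - 1" using ps tau(4) by simp
        then have st: "move_site ms \<tau> = i - 1" using site_b'[OF taul] 2 by simp
        have A1: "k > -(rr m ms \<tau> (i - 1) + max 0 (- (i - 1)))" using IH st 2 abt by simp
        have A2: "k \<le> rr m ms \<tau> (i - 1) + max 0 (i - 1)" using IH st 2 by simp
        consider "i \<ge> 1" | "i = 0" | "i \<le> -1" by linarith
        then show ?thesis
        proof cases
          case 1 then show ?thesis using A1 A2 E anti2 by (auto simp: max_def split: if_splits)
        next
          case 2 then show ?thesis using A1 A2 E anti2 by (auto simp: max_def split: if_splits)
        next
          case 3 then show ?thesis using A1 A2 E anti2 by (auto simp: max_def split: if_splits)
        qed
      next
        case 3
        then show ?thesis using ps tau(3,4) by simp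
      qed
    qed
    show ?thesis using key[OF ab(2) ci(1)] key[OF ab(3) ci(2)] by simp
  qed
  then show ?case unfolding a_def b_def R_def i_def by simp
qed


lemma FP: assumes kc: "k \<in> chips m"
  shows "(k < 0 \<longrightarrow> conf_at ms (length ms) k \<le> k) \<and> (k > 0 \<longrightarrow> conf_at ms (length ms) k \<ge> k)"
proof -
  define n where "n = length ms"
  define p where "p = conf_at ms n k"
  have inj: "inj_on (conf_at ms n) (chips m)" using cr unfolding n_def by (simp add: complete_run_def)
  have "k \<in> {k \<in> chips m. conf_at ms n k = p}" using kc unfolding p_def by simp
  then have "Nc m ms n p \<ge> 1" unfolding Nc_def using finite_chips
    by (metis (no_types, lifting) One_nat_def Suc_leI card_gt_0_iff empty_iff finite_subset mem_Collect_eq subsetI)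
  moreover have "int (Nc m ms n p) = fin m p"
    using Nc_Nval'[of n p] rr_final unfolding n_def by (simp add: Nval_def)
  ultimately have "fin m p \<ge> 1" by simp
  then have pr: "p \<noteq> 0" "\<bar>p\<bar> \<le> m" by (auto simp: fin_def split: if_splits)
  consider "p < 0" | "p > 0" using pr by linarith
  then show ?thesis
  proof cases
    case 1
    have "Fm m (p + 1) \<ge> m - \<bar>p + 1\<bar>" using Fm_ge[of "p+1" m] 1 pr by simp
    then have "0 + 1 \<le> Fm m (p + 1)" using 1 pr by simp
    then obtain t where t: "t < length ms" "move_site ms t = p + 1" "rr m ms t (p + 1) = 0 + 1"
      using move_exists[of 0 "p + 1"] by auto
    have rng: "rr m ms t (move_site ms t) \<le> m - \<bar>move_site ms t\<bar>" using t 1 pr by simp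
    have E: "rr m ms t p = 0"
    proof (cases "p = -1")
      case True then show ?thesis using Econs_t[OF t(1) rng] t(2,3) by auto
    next
      case False then show ?thesis using Econs_t[OF t(1) rng] t(2,3) 1 by auto
    qed
    define a where "a = fst (ms ! t)"
    have ac: "a \<in> chips m" using lt'(2)[OF t(1)] unfolding a_def .
    have c1: "conf_at ms (Suc t) a = p" using pos_Suc'[OF t(1), of a] site_a'[OF t(1)] t(2) unfolding a_def by simp
    have "conf_at ms n a = p"
      using stay[of "Suc t" n p a] c1 no_more[OF E] t(1) unfolding n_def by auto
    then have ak: "a = k" using inj ac kc unfolding p_def inj_on_def by auto
    have HH: "a \<ge> -(1 + max 0 (- (p + 1)))" "snd (ms ! t) \<le> 1 + max 0 (p + 1)"
      using H[OF t(1)] t(2,3) unfolding a_def by auto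
    have "a < snd (ms ! t)" using lt'(1)[OF t(1)] unfolding a_def .
    then show ?thesis using HH ak 1 unfolding p_def n_def by (auto simp: max_def split: if_splits)
  next
    case 2
    have "Fm m (p - 1) \<ge> m - \<bar>p - 1\<bar>" using Fm_ge[of "p-1" m] 2 pr by simp
    then have "0 + 1 \<le> Fm m (p - 1)" using 2 pr by simp
    then obtain t where t: "t < length ms" "move_site ms t = p - 1" "rr m ms t (p - 1) = 0 + 1"
      using move_exists[of 0 "p - 1"] by auto
    have rng: "rr m ms t (move_site ms t) \<le> m - \<bar>move_site ms t\<bar>" using t 2 pr by simp
    have E: "rr m ms t p = 0"
    proof (cases "p = 1")
      case True then show ?thesis using Econs_t[OF t(1) rng] t(2,3) by auto
    next
      case False then show ?thesis using Econs_t[OF t(1) rng] t(2,3) 2 by auto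
    qed
    define b where "b = snd (ms ! t)"
    have bc: "b \<in> chips m" using lt'(3)[OF t(1)] unfolding b_def .
    have ne: "b \<noteq> fst (ms ! t)" using lt'(1)[OF t(1)] unfolding b_def by simp
    have c1: "conf_at ms (Suc t) b = p" using pos_Suc'[OF t(1), of b] site_b'[OF t(1)] t(2) ne unfolding b_def by simp
    have "conf_at ms n b = p"
      using stay[of "Suc t" n p b] c1 no_more[OF E] t(1) unfolding n_def by auto
    then have bk: "b = k" using inj bc kc unfolding p_def inj_on_def by auto
    have HH: "fst (ms ! t) \<ge> -(1 + max 0 (- (p - 1)))" "b \<le> 1 + max 0 (p - 1)"
      using H[OF t(1)] t(2,3) unfolding b_def by auto
    have "fst (ms ! t) < b" using lt'(1)[OF t(1)] unfolding b_def .
    then show ?thesis using HH bk 2 unfolding p_def n_def by (auto simp: max_def split: if_splits)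
  qed
qed

lemma P1: assumes k: "-m \<le> k" "k < 0" and x: "0 \<le> x" "x \<le> m - 1"
  shows "\<exists>t. is_move_xy ms x (-k-1) t \<and> conf_at ms t k \<le> x + k + 1"
proof -
  define y where "y = -k-1"
  define s where "s = x - y"
  define j where "j = min x y"
  have y: "0 \<le> y" "y \<le> m - 1" using k unfolding y_def by auto
  have sb: "\<bar>s\<bar> + j \<le> m - 1" using x y unfolding s_def j_def by (auto simp: min_def)
  have j0: "0 \<le> j" using x y unfolding j_def by simp
  have "Fm m s \<ge> m - \<bar>s\<bar>" using Fm_ge[of s m] sb j0 by simp
  then have "j + 1 \<le> Fm m s" using sb by simp
  with j0 obtain t where t: "t < length ms" "move_site ms t = s" "rr m ms t s = j + 1"
    using move_exists by blast
  have mv: "is_move_xy ms x y t"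
    using later[OF t(1)] t unfolding is_move_xy_def s_def j_def by simp
  have kc: "k \<in> chips m" using k unfolding chips_def by auto
  have "conf_at ms t k \<le> s"
  proof (rule ccontr)
    assume c: "\<not> conf_at ms t k \<le> s"
    have "conf_at ms (length ms) k \<le> k" using FP[OF kc] k by simp
    moreover have "k \<le> s" using x unfolding s_def y_def by simp
    ultimately obtain \<tau> where tau: "t \<le> \<tau>" "\<tau> < length ms" "\<not> conf_at ms \<tau> k \<le> s" "conf_at ms (Suc \<tau>) k \<le> s"
      using cross[of "\<lambda>\<tau>. \<not> conf_at ms \<tau> k \<le> s" t "length ms"] c t(1) by auto
    have ps: "conf_at ms (Suc \<tau>) k = (if k = fst (ms ! \<tau>) then conf_at ms \<tau> k - 1
         else if k = snd (ms ! \<tau>) then conf_at ms \<tau> k + 1 else conf_at ms \<tau> k)"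
      using pos_Suc'[OF tau(2)] by simp
    have ka: "k = fst (ms ! \<tau>)" "conf_at ms \<tau> k = s + 1"
      using ps tau(3,4) by (auto split: if_splits)
    have st: "move_site ms \<tau> = s + 1" using site_a'[OF tau(2)] ka by simp
    have HH: "k \<ge> -(rr m ms \<tau> (s + 1) + max 0 (- (s + 1)))" using H[OF tau(2)] st ka by simp
    have anti: "rr m ms \<tau> (s + 1) \<le> rr m ms t (s + 1)" using tau(1) by (rule rr_anti)
    have rng: "rr m ms t (move_site ms t) \<le> m - \<bar>move_site ms t\<bar>" using t sb by simp
    have E: "(s \<ge> 0 \<longrightarrow> rr m ms t (s + 1) = j) \<and> (s \<le> -1 \<longrightarrow> rr m ms t (s + 1) = j + 1)"
      using Econs_t[OF t(1) rng] t(2,3) by (cases "s = 0") auto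
    show False
    proof (cases "s \<ge> 0")
      case True
      then have "j = y" unfolding s_def j_def by simp
      then show ?thesis using HH anti E True unfolding y_def by (auto simp: max_def split: if_splits)
    next
      case False
      then have "j = x" unfolding s_def j_def by simp
      then show ?thesis using HH anti E False unfolding y_def s_def by (auto simp: max_def split: if_splits)
    qed
  qed
  then show ?thesis using mv unfolding s_def y_def by auto
qed

lemma P2: assumes k: "0 < k" "k \<le> m" and y: "0 \<le> y" "y \<le> m - 1"
  shows "\<exists>t. is_move_xy ms (k-1) y t \<and> conf_at ms t k \<ge> k - 1 - y"
proof -
  define x where "x = k - 1"
  define s where "s = x - y"
  define j where "j = min x y"
  have x: "0 \<le> x" "x \<le> m - 1" using k unfolding x_def by auto
  have sb: "\<bar>s\<bar> + j \<le> m - 1" using x y unfolding s_def j_def by (auto simp: min_def)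
  have j0: "0 \<le> j" using x y unfolding j_def by simp
  have "Fm m s \<ge> m - \<bar>s\<bar>" using Fm_ge[of s m] sb j0 by simp
  then have "j + 1 \<le> Fm m s" using sb by simp
  with j0 obtain t where t: "t < length ms" "move_site ms t = s" "rr m ms t s = j + 1"
    using move_exists by blast
  have mv: "is_move_xy ms x y t"
    using later[OF t(1)] t unfolding is_move_xy_def s_def j_def by simp
  have kc: "k \<in> chips m" using k unfolding chips_def by auto
  have "conf_at ms t k \<ge> s"
  proof (rule ccontr)
    assume c: "\<not> conf_at ms t k \<ge> s"
    have "conf_at ms (length ms) k \<ge> k" using FP[OF kc] k by simp
    moreover have "k \<ge> s" using y unfolding s_def x_def by simp
    ultimately obtain \<tau> where tau: "t \<le> \<tau>" "\<tau> < length ms" "\<not> conf_at ms \<tau> k \<ge> s" "conf_at ms (Suc \<tau>) k \<ge> s"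
      using cross[of "\<lambda>\<tau>. \<not> conf_at ms \<tau> k \<ge> s" t "length ms"] c t(1) by auto
    have ps: "conf_at ms (Suc \<tau>) k = (if k = fst (ms ! \<tau>) then conf_at ms \<tau> k - 1
         else if k = snd (ms ! \<tau>) then conf_at ms \<tau> k + 1 else conf_at ms \<tau> k)"
      using pos_Suc'[OF tau(2)] by simp
    have kb: "k = snd (ms ! \<tau>)" "k \<noteq> fst (ms ! \<tau>)" "conf_at ms \<tau> k = s - 1"
      using ps tau(3,4) by (auto split: if_splits)
    have st: "move_site ms \<tau> = s - 1" using site_b'[OF tau(2)] kb by simp
    have HH: "k \<le> rr m ms \<tau> (s - 1) + max 0 (s - 1)" using H[OF tau(2)] st kb by simp
    have anti: "rr m ms \<tau> (s - 1) \<le> rr m ms t (s - 1)" using tau(1) by (rule rr_anti)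
    have rng: "rr m ms t (move_site ms t) \<le> m - \<bar>move_site ms t\<bar>" using t sb by simp
    have E: "(s \<ge> 1 \<longrightarrow> rr m ms t (s - 1) = j + 1) \<and> (s \<le> 0 \<longrightarrow> rr m ms t (s - 1) = j)"
      using Econs_t[OF t(1) rng] t(2,3) by (cases "s = 0") auto
    show False
    proof (cases "s \<ge> 1")
      case True
      then have "j = y" unfolding s_def j_def by simp
      then show ?thesis using HH anti E True unfolding x_def s_def by (auto simp: max_def split: if_splits)
    next
      case False
      then have "j = x" unfolding s_def j_def by simp
      then show ?thesis using HH anti E False unfolding x_def s_def by (auto simp: max_def split: if_splits)
    qed
  qed
  then show ?thesis using mv unfolding s_def x_def by auto
qed

end

theorem lemma2p9:
  fixes m :: int and ms :: "(int \<times> int) list"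
  assumes "m \<ge> 1" and "complete_run m ms"
  shows "(\<forall>k x. -m \<le> k \<and> k < 0 \<and> 0 \<le> x \<and> x \<le> m - 1 \<longrightarrow>
            (\<exists>t. is_move_xy ms x (-k-1) t \<and> conf_at ms t k \<le> x + k + 1))
       \<and> (\<forall>k y. 0 < k \<and> k \<le> m \<and> 0 \<le> y \<and> y \<le> m - 1 \<longrightarrow>
            (\<exists>t. is_move_xy ms (k-1) y t \<and> conf_at ms t k \<ge> k - 1 - y))"
  using P1[OF assms] P2[OF assms] by blast

end
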